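(* Consider the following algorithm (SeqPolyPA) for polynomial preferential attachment with exponent $\alpha>0$ and one host per new node. It maintains a list $P$ (the proposal list) of nodes, in which a node may occur several times; for a node $v$ let $c(v)$ be the number of occurrences of $v$ in $P$ and $w(v)=\deg(v)^\alpha/c(v)$. Initially $P$ contains each seed node $v$ exactly $\lceil \deg_0(v)^\alpha n_0/W_0\rceil$ times. To attach the $i$-th new node $v_{n_0+i}$ to the current graph $G_{i-1}$, the algorithm repeatedly selects a candidate $h$ uniformly at random among the positions of $P$ and accepts it with probability $w(h)/\max_{v\in V_{i-1}} w(v)$ (all quantities taken with respect to $G_{i-1}$ and the current $P$), until a candidate is accepted. Then it adds $v_{n_0+i}$ and the edge $\{v_{n_0+i},h\}$ to the graph, appends $v_{n_0+i}$ once to $P$, and afterwards appends $h$ to $P$ repeatedly as long as $w(h)>W_i/n_i$ (with respect to $G_i$). Then, in every step, SeqPolyPA selects each node $h$ of the current graph $G$ as host with probability $\deg(h)^\alpha/W$, where $W=\sum_{v\in V(G)}\deg(v)^\alpha$.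
   Context: Preferential attachment model: start from a seed graph $G_0=(V_0,E_0)$ with $n_0$ nodes and $m_0$ edges; iteratively add $N$ new nodes $v_{n_0+1},\dots,v_{n_0+N}$, each connected to earlier nodes ("hosts"); here each new node receives one host. $G_i=(V_i,E_i)$ denotes the graph after $i$ new nodes were added, $n_i=n_0+i$, $\deg_i(v)$ is the degree of $v$ in $G_i$, and $W_i=\sum_{v\in V_i}\deg_i(v)^\alpha$ (assumed positive). In polynomial preferential attachment the host $h$ is chosen with probability proportional to $\deg(h)^\alpha$. *)

theory Defs
  imports Complex_Main
begin

text \<open>Graphs: nodes are 0,...,n-1 (node n is the next new node); edges are
  2-element sets of nodes. The proposal list P is a list of nodes.\<close>

definition degE :: "nat set set \<Rightarrow> nat \<Rightarrow> nat" where
  "degE E v = card {e \<in> E. v \<in> e}"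

definition Wt :: "real \<Rightarrow> nat \<Rightarrow> nat set set \<Rightarrow> real" where
  "Wt \<alpha> n E = (\<Sum>v<n. real (degE E v) powr \<alpha>)"

definition wgt :: "real \<Rightarrow> nat set set \<Rightarrow> nat list \<Rightarrow> nat \<Rightarrow> real" where
  "wgt \<alpha> E P v = real (degE E v) powr \<alpha> / real (count_list P v)"

definition wmax :: "real \<Rightarrow> nat \<Rightarrow> nat set set \<Rightarrow> nat list \<Rightarrow> real" where
  "wmax \<alpha> n E P = Max (wgt \<alpha> E P ` {..<n})"

text \<open>Probability that a single trial of the rejection loop draws a position of P
  holding h (uniformly among the positions) and accepts it.\<close>
definition trial_acc :: "real \<Rightarrow> nat \<Rightarrow> nat set set \<Rightarrow> nat list \<Rightarrow> nat \<Rightarrow> real" where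
  "trial_acc \<alpha> n E P h =
     (real (count_list P h) / real (length P)) * (wgt \<alpha> E P h / wmax \<alpha> n E P)"

definition acc_total :: "real \<Rightarrow> nat \<Rightarrow> nat set set \<Rightarrow> nat list \<Rightarrow> real" where
  "acc_total \<alpha> n E P = (\<Sum>h\<in>set P. trial_acc \<alpha> n E P h)"

text \<open>Probability that the repeat-until-accepted loop returns h: the first k trials
  reject and trial k+1 selects and accepts h, summed over k.\<close>
definition host_prob :: "real \<Rightarrow> nat \<Rightarrow> nat set set \<Rightarrow> nat list \<Rightarrow> nat \<Rightarrow> real" where
  "host_prob \<alpha> n E P h =
     (\<Sum>k. (1 - acc_total \<alpha> n E P) ^ k * trial_acc \<alpha> n E P h)"

definition new_edges :: "nat \<Rightarrow> nat set set \<Rightarrow> nat \<Rightarrow> nat set set" where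
  "new_edges n E h = insert {n, h} E"

definition extra_copies :: "real \<Rightarrow> nat \<Rightarrow> nat set set \<Rightarrow> nat list \<Rightarrow> nat \<Rightarrow> nat" where
  "extra_copies \<alpha> n E P h =
     (LEAST k. \<not> (wgt \<alpha> (new_edges n E h) (P @ [n] @ replicate k h) h
                  > Wt \<alpha> (Suc n) (new_edges n E h) / real (Suc n)))"

definition new_P :: "real \<Rightarrow> nat \<Rightarrow> nat set set \<Rightarrow> nat list \<Rightarrow> nat \<Rightarrow> nat list" where
  "new_P \<alpha> n E P h = P @ [n] @ replicate (extra_copies \<alpha> n E P h) h"

text \<open>States (n, E, P) reachable by SeqPolyPA from the seed graph ({0..<n0}, E0):
  initially each seed node v occurs exactly ceil(deg_0(v)^alpha n0 / W_0) times in P;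
  in a step, a host h that the loop returns with positive probability is used.\<close>
inductive reachable :: "real \<Rightarrow> nat \<Rightarrow> nat set set \<Rightarrow> nat \<Rightarrow> nat set set \<Rightarrow> nat list \<Rightarrow> bool"
  for \<alpha> :: real and n0 :: nat and E0 :: "nat set set" where
  init: "set P \<subseteq> {..<n0} \<Longrightarrow>
         (\<forall>v<n0. count_list P v =
             nat \<lceil>real (degE E0 v) powr \<alpha> * real n0 / Wt \<alpha> n0 E0\<rceil>) \<Longrightarrow>
         reachable \<alpha> n0 E0 n0 E0 P"
| step: "reachable \<alpha> n0 E0 n E P \<Longrightarrow> h < n \<Longrightarrow> trial_acc \<alpha> n E P h > 0 \<Longrightarrow>
         reachable \<alpha> n0 E0 (Suc n) (new_edges n E h) (new_P \<alpha> n E P h)"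

end

theory Submission
  imports Defs
begin

definition inv_st :: "real \<Rightarrow> nat \<Rightarrow> nat set set \<Rightarrow> nat list \<Rightarrow> bool" where
  "inv_st \<alpha> n E P \<longleftrightarrow> finite E \<and> set P \<subseteq> {..<n} \<and>
     (\<forall>v<n. count_list P v = 0 \<longrightarrow> degE E v = 0) \<and> Wt \<alpha> n E > 0"

lemma trial_acc_pos_count:
  assumes "trial_acc \<alpha> n E P h > 0" shows "count_list P h > 0"
  using assms unfolding trial_acc_def by (cases "count_list P h = 0") auto

lemma reach_inv:
  assumes "finite E0" "Wt \<alpha> n0 E0 > 0" "reachable \<alpha> n0 E0 n E P"
  shows "inv_st \<alpha> n E P"
  using assms(3)
proof (induction rule: reachable.induct)
  case (init P)
  have "count_list P v = 0 \<longrightarrow> degE E0 v = 0" if "v < n0" for v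
  proof
    assume c: "count_list P v = 0"
    show "degE E0 v = 0"
    proof (rule ccontr)
      assume "degE E0 v \<noteq> 0"
      hence "real (degE E0 v) powr \<alpha> > 0" by simp
      moreover have "real n0 > 0" using that by simp
      ultimately have "real (degE E0 v) powr \<alpha> * real n0 / Wt \<alpha> n0 E0 > 0"
        using assms(2) by simp
      hence "\<lceil>real (degE E0 v) powr \<alpha> * real n0 / Wt \<alpha> n0 E0\<rceil> > 0" by linarith
      thus False using init(2) that c by simp
    qed
  qed
  thus ?case using init assms(1,2) unfolding inv_st_def by auto
next
  case (step n E P h)
  have cpos: "count_list P h > 0" using step(3) by (rule trial_acc_pos_count)
  let ?E = "new_edges n E h"
  let ?P = "new_P \<alpha> n E P h"
  have fin: "finite ?E" using step(4) unfolding inv_st_def new_edges_def by auto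
  have setP: "set ?P \<subseteq> {..<Suc n}" using step(2,4) unfolding inv_st_def new_P_def by auto
  have cnt: "\<forall>v<Suc n. count_list ?P v = 0 \<longrightarrow> degE ?E v = 0"
  proof (intro allI impI)
    fix v assume v: "v < Suc n" and c: "count_list ?P v = 0"
    have vn: "v \<noteq> n" using c unfolding new_P_def by (auto split: if_splits)
    have vh: "v \<noteq> h" using c cpos unfolding new_P_def by (auto split: if_splits)
    have "count_list P v = 0" using c unfolding new_P_def by simp
    hence "degE E v = 0" using step(4) v vn unfolding inv_st_def by auto
    moreover have "{e \<in> ?E. v \<in> e} = {e \<in> E. v \<in> e}"
      using vn vh unfolding new_edges_def by auto
    ultimately show "degE ?E v = 0" unfolding degE_def by simp
  qed
  have "{n, h} \<in> {e \<in> ?E. n \<in> e}" unfolding new_edges_def by simp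
  hence "degE ?E n \<noteq> 0" using fin unfolding degE_def by auto
  hence pos: "real (degE ?E n) powr \<alpha> > 0" by simp
  have "Wt \<alpha> (Suc n) ?E \<ge> real (degE ?E n) powr \<alpha>"
    unfolding Wt_def by (rule member_le_sum) auto
  hence "Wt \<alpha> (Suc n) ?E > 0" using pos by linarith
  thus ?case using fin setP cnt unfolding inv_st_def by blast
qed

lemma main:
  assumes inv: "inv_st \<alpha> n E P" and hn: "h < n"
  shows "host_prob \<alpha> n E P h = real (degE E h) powr \<alpha> / Wt \<alpha> n E"
proof -
  define d where "d v = real (degE E v) powr \<alpha>" for v
  define L where "L = real (length P)"
  define m where "m = wmax \<alpha> n E P"
  define A where "A = acc_total \<alpha> n E P"
  have setP: "set P \<subseteq> {..<n}" and c0: "\<And>v. v < n \<Longrightarrow> count_list P v = 0 \<Longrightarrow> d v = 0"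
    and Wpos: "Wt \<alpha> n E > 0" using inv unfolding inv_st_def d_def by auto
  have dnn: "d v \<ge> 0" for v unfolding d_def by simp
  have S: "(\<Sum>v\<in>set P. d v) = Wt \<alpha> n E"
    unfolding Wt_def d_def[symmetric]
    by (rule sum.mono_neutral_left) (use setP c0 count_list_0_iff in auto)
  obtain v where v: "v \<in> set P" "d v > 0"
  proof (rule ccontr)
    assume "\<not> thesis"
    with that have "\<forall>v\<in>set P. d v \<le> 0" by (meson not_le)
    hence "(\<Sum>v\<in>set P. d v) \<le> 0" by (simp add: sum_nonpos)
    thus False using S Wpos by simp
  qed
  have Lpos: "L > 0" using v(1) unfolding L_def by (cases P) auto
  have wle: "wgt \<alpha> E P u \<le> m" if "u < n" for u
    unfolding m_def wmax_def using that by (intro Max_ge) auto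
  have wd: "wgt \<alpha> E P u = d u / real (count_list P u)" for u
    unfolding wgt_def d_def by simp
  have cv: "count_list P v > 0" using v(1) count_list_0_iff by fastforce
  have "wgt \<alpha> E P v > 0" using wd[of v] cv v(2) by simp
  hence mpos: "m > 0" using wle[of v] v(1) setP by force
  have ta: "trial_acc \<alpha> n E P u = d u / (L * m)" if "u \<in> set P" for u
  proof -
    have "count_list P u > 0" using that count_list_0_iff by fastforce
    thus ?thesis unfolding trial_acc_def wd L_def m_def[symmetric] by (simp add: field_simps)
  qed
  have Aeq: "A = Wt \<alpha> n E / (L * m)"
    unfolding A_def acc_total_def S[symmetric] sum_divide_distrib by (rule sum.cong) (auto simp: ta)
  have Apos: "A > 0" using Aeq Wpos Lpos mpos by simp
  have "Wt \<alpha> n E = (\<Sum>u\<in>set P. real (count_list P u) * wgt \<alpha> E P u)"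
    unfolding S[symmetric] by (rule sum.cong) (auto simp: wd count_list_0_iff)
  also have "\<dots> \<le> (\<Sum>u\<in>set P. real (count_list P u) * m)"
    by (rule sum_mono, rule mult_left_mono) (use wle setP in auto)
  also have "\<dots> = L * m"
    unfolding sum_distrib_right[symmetric] L_def
    using sum_count_set[of P "set P"] by (metis finite_set of_nat_sum order_refl)
  finally have "A \<le> 1" using Aeq Lpos mpos by simp
  hence nrm: "norm (1 - A) < 1" using Apos by simp
  have "(\<lambda>k. (1 - A) ^ k * trial_acc \<alpha> n E P h) sums (1 / (1 - (1 - A)) * trial_acc \<alpha> n E P h)"
    by (rule sums_mult2[OF geometric_sums[OF nrm]])
  hence hp: "host_prob \<alpha> n E P h = trial_acc \<alpha> n E P h / A"
    unfolding host_prob_def A_def[symmetric] by (simp add: sums_iff)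
  show ?thesis
  proof (cases "h \<in> set P")
    case True
    thus ?thesis using hp ta[OF True] Aeq Lpos mpos d_def by simp
  next
    case False
    hence "count_list P h = 0" by simp
    hence "d h = 0" using c0 hn by simp
    moreover have "trial_acc \<alpha> n E P h = 0" using False unfolding trial_acc_def by simp
    ultimately show ?thesis using hp d_def by simp
  qed
qed

theorem theorem1:
  fixes \<alpha> :: real and n0 :: nat and E0 :: "nat set set"
    and n :: nat and E :: "nat set set" and P :: "nat list" and h :: nat
  assumes "\<alpha> > 0"
    and "finite E0"
    and "\<forall>e\<in>E0. e \<subseteq> {..<n0} \<and> card e = 2"
    and "Wt \<alpha> n0 E0 > 0"
    and "reachable \<alpha> n0 E0 n E P"
    and "h < n"
  shows "host_prob \<alpha> n E P h = real (degE E h) powr \<alpha> / Wt \<alpha> n E"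
  using main[OF reach_inv[OF assms(2,4,5)] assms(6)] .

end
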